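(* Let $\{y_t\}_{t\in\mathbb{Z}}$ be a real, mean-zero, covariance-stationary series with $\mathcal{F}_t=\sigma(y_s,\,s\le t)$, such that $y_t=\sum_{s=0}^{\infty}\kappa_s\epsilon_{t-s}$ with $\kappa_0=1$, $\sum_s|\kappa_s|<\infty$, $\kappa(z)=\sum_s\kappa_sz^s\ne0$ for $|z|\le1$, $\{\epsilon_t\}$ a martingale difference sequence with respect to $\{\mathcal{F}_t\}$, $E[\epsilon_t^2\mid\mathcal{F}_{t-1}]=\sigma_\epsilon^2$ a.s. (constant), and $\sup_t|\epsilon_t|\le K<\infty$ a.s. Suppose moreover that $\sup_tE[|\epsilon_t|^{2p}\mid\mathcal{F}_{t-1}]<\infty$ a.s. for some $p>1$. Then for any sequence $\hat y_t=y_t-\tilde y_{t-1}$ in which each $\tilde y_{t-1}$ is $\mathcal{F}_{t-1}$-measurable, it holds that $\liminf_{t\to\infty}t^{-1}\sum_{s=1}^t\hat y_s^2\ge\sigma_\epsilon^2$ almost surely, where $\sigma_\epsilon^2=E[\epsilon_t^2]$. *)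

theory Defs
  imports "HOL-Probability.Probability"
begin

definition natfilt :: "'a measure \<Rightarrow> (int \<Rightarrow> 'a \<Rightarrow> real) \<Rightarrow> int \<Rightarrow> 'a measure" where
  "natfilt M y t = sigma (space M) {y s -` A \<inter> space M | s A. s \<le> t \<and> A \<in> sets borel}"

end

theory Submission
  imports Defs
begin


lemma exp_neg_le_quad:
  fixes u :: real assumes "0 \<le> u" shows "exp (-u) \<le> 1 - u + u\<^sup>2"
proof -
  have "1 + u \<le> exp u" by simp
  have e: "exp (-u) = 1 / exp u" by (simp add: exp_minus field_simps)
  have "1 / exp u \<le> 1 / (1 + u)"
    using assms \<open>1 + u \<le> exp u\<close> by (intro divide_left_mono) auto
  also have "\<dots> \<le> 1 - u + u\<^sup>2"
  proof -
    have "1 \<le> (1 + u) * (1 - u + u\<^sup>2)" using assms by (simp add: power2_eq_square algebra_simps)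
    then show ?thesis using assms by (simp add: field_simps)
  qed
  finally show ?thesis using e by simp
qed

lemma key_pointwise:
  fixes e z l K c :: real
  assumes eK: "\<bar>e\<bar> \<le> K" and l: "0 < l" and c: "81 * K^4 \<le> c"
  shows "exp (-l * (e + z)\<^sup>2) \<le>
     (if 2*K \<le> \<bar>z\<bar> then exp (-l*K\<^sup>2) else 1 - l*z\<^sup>2 + c*l\<^sup>2)
   + (if 2*K \<le> \<bar>z\<bar> then 0 else -2*l*z) * e + (if 2*K \<le> \<bar>z\<bar> then 0 else -l) * e\<^sup>2"
proof (cases "2*K \<le> \<bar>z\<bar>")
  case True
  have K0: "0 \<le> K" using eK by linarith
  have "K \<le> \<bar>e + z\<bar>" using True eK by linarith
  then have "K\<^sup>2 \<le> (e + z)\<^sup>2" using K0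
    by (metis abs_le_square_iff abs_of_nonneg)
  then have "-l * (e+z)\<^sup>2 \<le> -l*K\<^sup>2" using l by simp
  then show ?thesis using True by simp
next
  case False
  define u where "u = l * (e+z)\<^sup>2"
  have u0: "0 \<le> u" unfolding u_def using l by simp
  have "\<bar>e + z\<bar> \<le> 3*K" using False eK by linarith
  then have "(e+z)\<^sup>2 \<le> (3*K)\<^sup>2" by (metis abs_le_square_iff abs_of_nonneg abs_ge_zero order_trans)
  then have "u \<le> l * (9*K\<^sup>2)" unfolding u_def using l by (simp add: power_mult_distrib)
  then have "u\<^sup>2 \<le> (l * (9*K\<^sup>2))\<^sup>2" using u0 by (simp add: power_mono)
  also have "\<dots> = 81*K^4 * l\<^sup>2" by (simp add: power_mult_distrib power2_eq_square eval_nat_numeral)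
  also have "\<dots> \<le> c * l\<^sup>2" using c by (simp add: mult_right_mono)
  finally have u2: "u\<^sup>2 \<le> c * l\<^sup>2" .
  have "exp (-l * (e + z)\<^sup>2) = exp (-u)" unfolding u_def by simp
  also have "\<dots> \<le> 1 - u + u\<^sup>2" by (rule exp_neg_le_quad[OF u0])
  also have "\<dots> \<le> 1 - u + c*l\<^sup>2" using u2 by simp
  also have "\<dots> = (1 - l*z\<^sup>2 + c*l\<^sup>2) + (-2*l*z) * e + (-l) * e\<^sup>2"
    unfolding u_def by (simp add: power2_eq_square algebra_simps)
  finally show ?thesis using False by simp
qed


lemma absmul_le: fixes g a b :: real assumes "\<bar>g\<bar> \<le> 1" "\<bar>a\<bar> \<le> b" shows "\<bar>g * a\<bar> \<le> b"
proof -
  have "\<bar>g\<bar> * \<bar>a\<bar> \<le> 1 * \<bar>a\<bar>" using assms(1) by (intro mult_right_mono) auto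
  then show ?thesis using assms(2) by (simp add: abs_mult)
qed

lemma absmul2: fixes x y a b :: real assumes "\<bar>x\<bar> \<le> a" "\<bar>y\<bar> \<le> b" shows "\<bar>x * y\<bar> \<le> a * b"
  using assms by (simp add: abs_mult mult_mono')

lemma step_bound:
  fixes M F :: "'a measure" and e z G :: "'a \<Rightarrow> real" and K s2 l :: real
  assumes P: "prob_space M" and sf: "sigma_finite_subalgebra M F"
    and e[measurable]: "e \<in> borel_measurable M"
    and eb: "AE x in M. \<bar>e x\<bar> \<le> K"
    and mds: "AE x in M. real_cond_exp M F e x = 0"
    and cv: "AE x in M. real_cond_exp M F (\<lambda>x. (e x)\<^sup>2) x = s2"
    and s2K: "s2 \<le> K\<^sup>2"
    and z[measurable]: "z \<in> borel_measurable F"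
    and G[measurable]: "G \<in> borel_measurable F" and G0: "\<And>x. 0 \<le> G x" and G1: "\<And>x. G x \<le> 1"
    and l: "0 < l"
  shows "(\<integral>x. G x * exp (-l * (e x + z x)\<^sup>2) \<partial>M) \<le> exp (-l * s2 + (81*K^4+1)*l\<^sup>2) * (\<integral>x. G x \<partial>M)"
proof -
  interpret prob_space M by (rule P)
  have subalg: "subalgebra M F" using sf by (simp add: sigma_finite_subalgebra_def)
  define c where "c = 81*K^4+1"
  define A where "A x = (if 2*K \<le> \<bar>z x\<bar> then exp (-l*K\<^sup>2) else 1 - l*(z x)\<^sup>2 + c*l\<^sup>2)" for x
  define B where "B x = (if 2*K \<le> \<bar>z x\<bar> then 0 else -2*l*z x)" for x
  define C where "C x = (if 2*K \<le> \<bar>z x\<bar> then 0 else -l)" for x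
  define \<rho> where "\<rho> = exp (-l * s2 + c*l\<^sup>2)"
  have AF[measurable]: "A \<in> borel_measurable F" unfolding A_def by measurable
  have BF[measurable]: "B \<in> borel_measurable F" unfolding B_def by measurable
  have CF[measurable]: "C \<in> borel_measurable F" unfolding C_def by measurable
  have GB_F[measurable]: "(\<lambda>x. G x * B x) \<in> borel_measurable F" by measurable
  have GC_F[measurable]: "(\<lambda>x. G x * C x) \<in> borel_measurable F" by measurable
  have [measurable]: "A \<in> borel_measurable M" "B \<in> borel_measurable M" "C \<in> borel_measurable M"
    "G \<in> borel_measurable M" "z \<in> borel_measurable M"
    using measurable_from_subalg[OF subalg] AF BF CF G z by blast+
  have Ab: "\<bar>A x\<bar> \<le> 1 + 4*l*K\<^sup>2 + c*l\<^sup>2" for x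
  proof (cases "2*K \<le> \<bar>z x\<bar>")
    case True
    have "exp (-(l*K\<^sup>2)) \<le> 1" using l by simp
    moreover have "0 \<le> l*K\<^sup>2" "0 \<le> c*l\<^sup>2" using l by (auto simp: c_def)
    moreover have "\<bar>A x\<bar> = exp (-(l*K\<^sup>2))" using True by (simp add: A_def)
    ultimately show ?thesis by linarith
  next
    case False
    then have "\<bar>z x\<bar> \<le> 2*K" by simp
    then have "(z x)\<^sup>2 \<le> (2*K)\<^sup>2" by (metis abs_le_square_iff abs_of_nonneg abs_ge_zero order_trans)
    then have "l*(z x)\<^sup>2 \<le> l*(4*K\<^sup>2)" using l by (simp add: power_mult_distrib)
    moreover have "0 \<le> l*(z x)\<^sup>2" "0 \<le> c*l\<^sup>2" using l by (auto simp: c_def)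
    ultimately show ?thesis using False by (simp add: A_def abs_if)
  qed
  have Bb: "\<bar>B x\<bar> \<le> 4*l*\<bar>K\<bar>" for x
    using l by (auto simp: B_def abs_mult)
  have Cb: "\<bar>C x\<bar> \<le> l" for x using l by (auto simp: C_def)
  have Gb: "\<bar>G x\<bar> \<le> 1" for x using G0 G1 by simp
  have e2b: "AE x in M. (e x)\<^sup>2 \<le> K\<^sup>2" using eb
    by eventually_elim (metis abs_le_square_iff abs_of_nonneg abs_ge_zero order_trans)
  have iGA: "integrable M (\<lambda>x. G x * A x)"
    by (rule integrable_const_bound[where B="1 + 4*l*K\<^sup>2 + c*l\<^sup>2"])
       (auto intro!: AE_I2 absmul_le[OF Gb Ab])
  have iGBe: "integrable M (\<lambda>x. (G x * B x) * e x)"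
    by (rule integrable_const_bound[where B="4*l*\<bar>K\<bar> * K"])
       (use eb in \<open>auto elim!: eventually_mono intro!: absmul2 absmul_le[OF Gb Bb]\<close>)
  have iGCe: "integrable M (\<lambda>x. (G x * C x) * (e x)\<^sup>2)"
    by (rule integrable_const_bound[where B="l * K\<^sup>2"])
       (use e2b in \<open>auto elim!: eventually_mono intro!: absmul2 absmul_le[OF Gb Cb]\<close>)
  have iGW: "integrable M (\<lambda>x. G x * exp (-l * (e x + z x)\<^sup>2))"
    by (rule integrable_const_bound[where B="1"]) (use l in \<open>auto intro!: AE_I2 absmul_le[OF Gb]\<close>)
  have iG: "integrable M G"
    by (rule integrable_const_bound[where B="1"]) (auto intro!: AE_I2 Gb)
  have pw: "AE x in M. G x * exp (-l * (e x + z x)\<^sup>2) \<le> G x * A x + (G x * B x) * e x + (G x * C x) * (e x)\<^sup>2"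
    using eb
  proof eventually_elim
    case (elim x)
    have "exp (-l * (e x + z x)\<^sup>2) \<le> A x + B x * e x + C x * (e x)\<^sup>2"
      unfolding A_def B_def C_def by (rule key_pointwise[OF elim l]) (simp add: c_def)
    then have "G x * exp (-l * (e x + z x)\<^sup>2) \<le> G x * (A x + B x * e x + C x * (e x)\<^sup>2)"
      using G0 by (rule mult_left_mono)
    then show ?case by (simp add: algebra_simps)
  qed
  have Bz: "(\<integral>x. (G x * B x) * e x \<partial>M) = 0"
  proof -
    have "(\<integral>x. (G x * B x) * e x \<partial>M) = (\<integral>x. (G x * B x) * real_cond_exp M F e x \<partial>M)"
      using sigma_finite_subalgebra.real_cond_exp_intg(2)[OF sf iGBe GB_F e] by simp
    also have "\<dots> = (\<integral>x. 0 \<partial>M)"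
      by (rule integral_cong_AE) (use mds in \<open>auto elim!: eventually_mono\<close>)
    finally show ?thesis by simp
  qed
  have Cz: "(\<integral>x. (G x * C x) * (e x)\<^sup>2 \<partial>M) = (\<integral>x. (G x * C x) * s2 \<partial>M)"
  proof -
    have "(\<integral>x. (G x * C x) * (e x)\<^sup>2 \<partial>M) = (\<integral>x. (G x * C x) * real_cond_exp M F (\<lambda>x. (e x)\<^sup>2) x \<partial>M)"
      using sigma_finite_subalgebra.real_cond_exp_intg(2)[OF sf iGCe GC_F] by simp
    also have "\<dots> = (\<integral>x. (G x * C x) * s2 \<partial>M)"
      by (rule integral_cong_AE) (use cv in \<open>auto elim!: eventually_mono\<close>)
    finally show ?thesis .
  qed
  have AC: "A x + C x * s2 \<le> \<rho>" for x
  proof (cases "2*K \<le> \<bar>z x\<bar>")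
    case True
    have "l * s2 \<le> l*K\<^sup>2" using l s2K by (simp add: mult_left_mono)
    moreover have "0 \<le> c*l\<^sup>2" by (simp add: c_def)
    ultimately have "-l*K\<^sup>2 \<le> -l * s2 + c*l\<^sup>2" by linarith
    then show ?thesis using True by (simp add: A_def C_def \<rho>_def)
  next
    case False
    have "1 - l*(z x)\<^sup>2 + c*l\<^sup>2 + (-l) * s2 \<le> 1 + (-l * s2 + c*l\<^sup>2)" using l by simp
    also have "\<dots> \<le> \<rho>" unfolding \<rho>_def by (rule exp_ge_add_one_self)
    finally show ?thesis using False by (simp add: A_def C_def)
  qed
  have iGCs: "integrable M (\<lambda>x. (G x * C x) * s2)" using iG
    by (intro integrable_const_bound[where B="l*\<bar>s2\<bar>"]) (auto intro!: AE_I2 absmul2 absmul_le[OF Gb Cb])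
  have "(\<integral>x. G x * exp (-l * (e x + z x)\<^sup>2) \<partial>M) \<le> (\<integral>x. G x * A x + (G x * B x) * e x + (G x * C x) * (e x)\<^sup>2 \<partial>M)"
    by (rule integral_mono_AE[OF iGW _ pw]) (intro Bochner_Integration.integrable_add iGA iGBe iGCe)
  also have "\<dots> = (\<integral>x. G x * A x \<partial>M) + (\<integral>x. (G x * B x) * e x \<partial>M) + (\<integral>x. (G x * C x) * (e x)\<^sup>2 \<partial>M)"
    using iGA iGBe iGCe by simp
  also have "\<dots> = (\<integral>x. G x * A x \<partial>M) + (\<integral>x. (G x * C x) * s2 \<partial>M)"
    using Bz Cz by simp
  also have "\<dots> = (\<integral>x. G x * (A x + C x * s2) \<partial>M)"
    using iGA iGCs by (simp add: algebra_simps)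
  also have "\<dots> \<le> (\<integral>x. G x * \<rho> \<partial>M)"
  proof (rule integral_mono)
    show "integrable M (\<lambda>x. G x * (A x + C x * s2))"
      using Bochner_Integration.integrable_add[OF iGA iGCs] by (simp add: algebra_simps)
    show "integrable M (\<lambda>x. G x * \<rho>)" using iG by simp
    show "G x * (A x + C x * s2) \<le> G x * \<rho>" for x by (rule mult_left_mono[OF AC G0])
  qed
  also have "\<dots> = \<rho> * (\<integral>x. G x \<partial>M)" by simp
  finally show ?thesis unfolding \<rho>_def c_def .
qed


lemma abstract_liminf:
  fixes M :: "'a measure" and F :: "nat \<Rightarrow> 'a measure" and e z :: "nat \<Rightarrow> 'a \<Rightarrow> real" and K s2 :: real
  assumes P: "prob_space M"
    and sf: "\<And>n. sigma_finite_subalgebra M (F n)"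
    and Fmono: "\<And>m n. m \<le> n \<Longrightarrow> sets (F m) \<subseteq> sets (F n)"
    and eF: "\<And>n. e n \<in> borel_measurable (F n)"
    and zF: "\<And>n. z (Suc n) \<in> borel_measurable (F n)"
    and eb: "\<And>n. AE x in M. \<bar>e n x\<bar> \<le> K"
    and mds: "\<And>n. AE x in M. real_cond_exp M (F n) (e (Suc n)) x = 0"
    and cv: "\<And>n. AE x in M. real_cond_exp M (F n) (\<lambda>x. (e (Suc n) x)\<^sup>2) x = s2"
    and s2K: "s2 \<le> K\<^sup>2"
  shows "AE x in M. ereal s2 \<le> liminf (\<lambda>n. ereal ((\<Sum>s=1..n. (e s x + z s x)\<^sup>2) / real n))"
proof -
  interpret prob_space M by (rule P)
  have subalg: "\<And>n. subalgebra M (F n)" using sf by (simp add: sigma_finite_subalgebra_def)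
  have Fsp: "space (F n) = space M" for n using subalg[of n] by (simp add: subalgebra_def)
  have mono_meas: "f \<in> borel_measurable (F n)" if "f \<in> borel_measurable (F m)" "m \<le> n" for f :: "'a \<Rightarrow> real" and m n
    using measurable_mono[of borel borel "F m" "F n"] Fmono[OF that(2)] Fsp that(1) by auto
  have eM[measurable]: "e n \<in> borel_measurable M" for n using measurable_from_subalg[OF subalg eF] .
  have zM[measurable]: "z (Suc n) \<in> borel_measurable M" for n using measurable_from_subalg[OF subalg zF] .
  define S where "S n x = (\<Sum>s=1..n. (e s x + z s x)\<^sup>2)" for n x
  have SF: "S n \<in> borel_measurable (F n)" for n
  proof -
    have "(\<lambda>x. (e s x + z s x)\<^sup>2) \<in> borel_measurable (F n)" if sn: "s \<in> {1..n}" for s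
    proof -
      obtain k where k: "s = Suc k" using sn by (cases s) (auto simp: atLeastAtMost_iff)
      have "e s \<in> borel_measurable (F n)" using mono_meas[OF eF] sn by auto
      moreover have "z s \<in> borel_measurable (F n)" using mono_meas[OF zF[of k]] sn k by auto
      ultimately show ?thesis by measurable
    qed
    then show ?thesis unfolding S_def by (intro borel_measurable_sum) auto
  qed
  have SM[measurable]: "S n \<in> borel_measurable M" for n using measurable_from_subalg[OF subalg SF] .
  have S0: "0 \<le> S n x" for n x unfolding S_def by (intro sum_nonneg) auto
  have bnd: "AE x in M. eventually (\<lambda>n. (s2 - \<delta>) * real n < S n x) sequentially" if d: "0 < \<delta>" for \<delta>
  proof -
    define c where "c = 81*K^4+1"
    have c0: "0 < c" unfolding c_def by (simp add: add_nonneg_pos)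
    define l where "l = \<delta> / (2*c)"
    have l0: "0 < l" unfolding l_def using d c0 by simp
    define \<rho> where "\<rho> = exp (-l * s2 + c*l\<^sup>2)"
    define q where "q = exp (-(\<delta>\<^sup>2 / (4*c)))"
    have intP: "(\<integral>x. exp (-l * S n x) \<partial>M) \<le> \<rho>^n" for n
    proof (induction n)
      case 0
      then show ?case by (simp add: S_def)
    next
      case (Suc n)
      have eq: "exp (-l * S (Suc n) x) = exp (-l * S n x) * exp (-l * (e (Suc n) x + z (Suc n) x)\<^sup>2)" for x
        by (simp add: S_def algebra_simps flip: exp_add)
      have GF: "(\<lambda>x. exp (-l * S n x)) \<in> borel_measurable (F n)" using SF[of n] by measurable
      have "(\<integral>x. exp (-l * S (Suc n) x) \<partial>M) = (\<integral>x. exp (-l * S n x) * exp (-l * (e (Suc n) x + z (Suc n) x)\<^sup>2) \<partial>M)"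
        using eq by simp
      also have "\<dots> \<le> exp (-l * s2 + (81*K^4+1)*l\<^sup>2) * (\<integral>x. exp (-l * S n x) \<partial>M)"
        by (rule step_bound[OF P sf eM eb mds cv s2K zF GF _ _ l0]) (use l0 S0 in \<open>auto simp: mult_nonneg_nonneg\<close>)
      also have "\<dots> \<le> \<rho> * \<rho>^n"
        using Suc.IH unfolding \<rho>_def c_def by (intro mult_left_mono) auto
      finally show ?case by simp
    qed
    define A where "A n = {x \<in> space M. S n x \<le> (s2 - \<delta>) * real n}" for n
    have A_sets[measurable]: "A n \<in> sets M" for n unfolding A_def by measurable
    have mA: "measure M (A n) \<le> q^n" for n
    proof -
      have ind: "indicator (A n) x \<le> exp (l * ((s2 - \<delta>) * real n)) * exp (-l * S n x)" for x
      proof (cases "x \<in> A n")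
        case True
        then have "l * S n x \<le> l * ((s2 - \<delta>) * real n)" using l0 by (auto simp: A_def)
        then have "1 \<le> exp (l * ((s2 - \<delta>) * real n) + (-l * S n x))" by simp
        then show ?thesis using True by (simp only: exp_add indicator_simps)
      qed auto
      have "measure M (A n) = (\<integral>x. indicator (A n) x \<partial>M)" by simp
      also have "\<dots> \<le> (\<integral>x. exp (l * ((s2 - \<delta>) * real n)) * exp (-l * S n x) \<partial>M)"
      proof (rule integral_mono[OF _ _ ind])
        show "integrable M (\<lambda>x. indicator (A n) x :: real)" by (rule integrable_const_bound[where B=1]) auto
        show "integrable M (\<lambda>x. exp (l * ((s2 - \<delta>) * real n)) * exp (-l * S n x))"
          by (rule integrable_const_bound[where B="exp (l * ((s2 - \<delta>) * real n))"])
             (use l0 S0 in \<open>auto intro!: AE_I2 mult_left_le\<close>)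
      qed
      also have "\<dots> = exp (l * ((s2 - \<delta>) * real n)) * (\<integral>x. exp (-l * S n x) \<partial>M)" by simp
      also have "\<dots> \<le> exp (l * ((s2 - \<delta>) * real n)) * \<rho>^n" using intP by (intro mult_left_mono) auto
      also have "\<dots> = exp (l * ((s2 - \<delta>) * real n) + real n * (-l * s2 + c*l\<^sup>2))"
        unfolding \<rho>_def by (simp add: exp_add exp_of_nat_mult)
      also have "l * ((s2 - \<delta>) * real n) + real n * (-l * s2 + c*l\<^sup>2) = real n * (-(\<delta>\<^sup>2 / (4*c)))"
        unfolding l_def using c0 by (simp add: field_simps power2_eq_square)
      also have "exp (real n * (-(\<delta>\<^sup>2 / (4*c)))) = q^n" unfolding q_def by (rule exp_of_nat_mult)
      finally show ?thesis .
    qed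
    have q1: "q < 1" unfolding q_def using d c0 by simp
    have summ: "summable (\<lambda>n. measure M (A n))"
      by (rule summable_comparison_test'[OF summable_geometric[of q]]) (use q1 mA in \<open>auto simp: q_def\<close>)
    have "AE x in M. eventually (\<lambda>n. x \<in> space M - A n) sequentially"
      by (rule borel_cantelli_AE1[OF A_sets _ summ]) (simp add: less_top[symmetric])
    then show ?thesis
      by (rule AE_mp) (auto intro!: AE_I2 elim!: eventually_mono simp: A_def not_le)
  qed
  have "AE x in M. \<forall>m::nat. eventually (\<lambda>n. (s2 - 1 / real (Suc m)) * real n < S n x) sequentially"
    unfolding AE_all_countable by (intro allI bnd) simp
  then show ?thesis
  proof (rule AE_mp, intro AE_I2 impI)
    fix x assume H: "\<forall>m::nat. eventually (\<lambda>n. (s2 - 1 / real (Suc m)) * real n < S n x) sequentially"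
    let ?L = "liminf (\<lambda>n. ereal ((\<Sum>s=1..n. (e s x + z s x)\<^sup>2) / real n))"
    have Lm: "ereal (s2 - 1 / real (Suc m)) \<le> ?L" for m
    proof (rule Liminf_bounded)
      have "eventually (\<lambda>n. (s2 - 1 / real (Suc m)) * real n < S n x \<and> 1 \<le> n) sequentially"
        using H eventually_ge_at_top[of 1] by (auto intro: eventually_conj)
      then show "eventually (\<lambda>n. ereal (s2 - 1 / real (Suc m)) \<le> ereal ((\<Sum>s=1..n. (e s x + z s x)\<^sup>2) / real n)) sequentially"
      proof (rule eventually_mono)
        fix n :: nat assume "(s2 - 1 / real (Suc m)) * real n < S n x \<and> 1 \<le> n"
        then show "ereal (s2 - 1 / real (Suc m)) \<le> ereal ((\<Sum>s=1..n. (e s x + z s x)\<^sup>2) / real n)"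
          by (auto simp: S_def pos_le_divide_eq less_imp_le)
      qed
    qed
    show "ereal s2 \<le> ?L"
    proof (rule ereal_le_epsilon2)
      fix \<epsilon> :: real assume "0 < \<epsilon>"
      then obtain m where m: "1 / real (Suc m) < \<epsilon>" using nat_approx_posE by blast
      have "ereal s2 = ereal (s2 - 1 / real (Suc m)) + ereal (1 / real (Suc m))" by simp
      also have "\<dots> \<le> ?L + ereal \<epsilon>" using Lm[of m] m by (intro add_mono) auto
      finally show "ereal s2 \<le> ?L + ereal \<epsilon>" .
    qed
  qed
qed



theorem proposition4p3:
  fixes M :: "'a measure"
    and y eps ytil :: "int \<Rightarrow> 'a \<Rightarrow> real"
    and kappa :: "nat \<Rightarrow> real"
    and sigma2 K p :: real
  assumes "prob_space M"
    \<comment> \<open>real, mean-zero, covariance-stationary series\<close>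
    and y_meas: "\<And>t. y t \<in> borel_measurable M"
    and y_sq_int: "\<And>t. integrable M (\<lambda>x. (y t x)\<^sup>2)"
    and y_mean: "\<And>t. integral\<^sup>L M (y t) = 0"
    and y_cov: "\<And>t h. integral\<^sup>L M (\<lambda>x. y t x * y (t + h) x) = integral\<^sup>L M (\<lambda>x. y 0 x * y h x)"
    \<comment> \<open>MA(infinity) representation\<close>
    and y_ma: "\<And>t. AE x in M. (\<lambda>s. kappa s * eps (t - int s) x) sums y t x"
    and kappa0: "kappa 0 = 1"
    and kappa_abs: "summable (\<lambda>s. \<bar>kappa s\<bar>)"
    and kappa_nz: "\<And>z::complex. norm z \<le> 1 \<Longrightarrow> (\<Sum>s. complex_of_real (kappa s) * z ^ s) \<noteq> 0"
    \<comment> \<open>martingale difference sequence w.r.t. the natural filtration of y\<close>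
    and eps_adapted: "\<And>t. eps t \<in> borel_measurable (natfilt M y t)"
    and eps_int: "\<And>t. integrable M (eps t)"
    and eps_mds: "\<And>t. AE x in M. real_cond_exp M (natfilt M y (t - 1)) (eps t) x = 0"
    \<comment> \<open>constant conditional variance\<close>
    and eps_cvar: "\<And>t. AE x in M. real_cond_exp M (natfilt M y (t - 1)) (\<lambda>x. (eps t x)\<^sup>2) x = sigma2"
    \<comment> \<open>uniformly bounded innovations\<close>
    and eps_bdd: "AE x in M. \<forall>t. \<bar>eps t x\<bar> \<le> K"
    \<comment> \<open>conditional 2p-th moment bound\<close>
    and p_gt: "p > 1"
    and eps_mom: "AE x in M. (SUP t. nn_cond_exp M (natfilt M y (t - 1))
                      (\<lambda>x. ennreal (\<bar>eps t x\<bar> powr (2 * p))) x) < \<top>"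
    \<comment> \<open>the predictor is F_{t-1}-measurable\<close>
    and ytil_meas: "\<And>t. ytil (t - 1) \<in> borel_measurable (natfilt M y (t - 1))"
  shows "AE x in M. ereal sigma2 \<le>
           liminf (\<lambda>t::nat. ereal ((\<Sum>s=1..t. (y (int s) x - ytil (int s - 1) x)\<^sup>2) / real t))"

proof -
  interpret prob_space M by fact
  have P: "prob_space M" by fact
  have nf_space: "space (natfilt M y t) = space M" for t
    unfolding natfilt_def by (simp add: space_measure_of_conv)
  have Gpow: "{y s -` A \<inter> space M | s A. s \<le> t \<and> A \<in> sets borel} \<subseteq> Pow (space M)" for t
    by auto
  have nf_sets: "sets (natfilt M y t) = sigma_sets (space M) {y s -` A \<inter> space M | s A. s \<le> t \<and> A \<in> sets borel}" for t
    unfolding natfilt_def using Gpow by (simp add: sets_measure_of)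
  have nf_subM: "sets (natfilt M y t) \<subseteq> sets M" for t
    unfolding nf_sets by (rule sets.sigma_sets_subset) (use y_meas in \<open>auto simp: measurable_sets\<close>)
  have nf_mono: "sets (natfilt M y s) \<subseteq> sets (natfilt M y t)" if "s \<le> t" for s t
    unfolding nf_sets using that by (intro sigma_sets_mono') (auto intro: order_trans)
  have subalg: "subalgebra M (natfilt M y t)" for t
    using nf_space nf_subM by (simp add: subalgebra_def)
  have sf: "sigma_finite_subalgebra M (natfilt M y t)" for t
    by (rule finite_measure_subalgebra_is_sigma_finite)
       (simp add: finite_measure_subalgebra_def finite_measure_subalgebra_axioms_def subalg finite_measure_axioms)
  have mono_meas: "f \<in> borel_measurable (natfilt M y t)" if "f \<in> borel_measurable (natfilt M y s)" "s \<le> t" for f :: "'a \<Rightarrow> real" and s t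
    using measurable_mono[of borel borel "natfilt M y s" "natfilt M y t"] nf_mono[OF that(2)] nf_space that(1) by auto
  have epsM[measurable]: "eps t \<in> borel_measurable M" for t using measurable_from_subalg[OF subalg eps_adapted] .
  define z where "z t x = suminf (\<lambda>i. kappa (Suc i) * eps (t - 1 - int i) x) - ytil (t - 1) x" for t x
  have zF: "z t \<in> borel_measurable (natfilt M y (t - 1))" for t
  proof -
    have "(\<lambda>x. kappa (Suc i) * eps (t - 1 - int i) x) \<in> borel_measurable (natfilt M y (t - 1))" for i
      using mono_meas[OF eps_adapted[of "t - 1 - int i"], of "t - 1"] by simp
    then have "(\<lambda>x. suminf (\<lambda>i. kappa (Suc i) * eps (t - 1 - int i) x)) \<in> borel_measurable (natfilt M y (t - 1))"
      by (rule borel_measurable_suminf)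
    then show ?thesis unfolding z_def using ytil_meas[of t] by measurable
  qed
  have ident: "AE x in M. \<forall>t. y t x - ytil (t - 1) x = eps t x + z t x"
  proof -
    have "AE x in M. \<forall>t. (\<lambda>s. kappa s * eps (t - int s) x) sums y t x"
      unfolding AE_all_countable using y_ma by blast
    then show ?thesis
    proof (rule AE_mp, intro AE_I2 impI allI)
      fix x t assume H: "\<forall>t. (\<lambda>s. kappa s * eps (t - int s) x) sums y t x"
      have f: "(\<lambda>i. kappa (Suc i) * eps (t - int (Suc i)) x) sums (y t x - kappa 0 * eps (t - int 0) x)"
        using H[rule_format, of t] by (subst sums_Suc_iff) simp
      have "(\<lambda>i. kappa (Suc i) * eps (t - int (Suc i)) x) = (\<lambda>i. kappa (Suc i) * eps (t - 1 - int i) x)"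
        by (simp add: algebra_simps)
      with f have "suminf (\<lambda>i. kappa (Suc i) * eps (t - 1 - int i) x) = y t x - eps t x"
        using kappa0 by (simp add: sums_iff)
      then show "y t x - ytil (t - 1) x = eps t x + z t x" unfolding z_def by simp
    qed
  qed
  have epsb: "AE x in M. \<bar>eps t x\<bar> \<le> K" for t using eps_bdd by (auto elim!: eventually_mono)
  have s2K: "sigma2 \<le> K\<^sup>2"
  proof -
    have e2b: "AE x in M. (eps 0 x)\<^sup>2 \<le> K\<^sup>2" using epsb[of 0]
      by eventually_elim (metis abs_le_square_iff abs_of_nonneg abs_ge_zero order_trans)
    have ie2: "integrable M (\<lambda>x. (eps 0 x)\<^sup>2)"
      by (rule integrable_const_bound[where B="K\<^sup>2"]) (use e2b in \<open>auto elim!: eventually_mono\<close>)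
    have "sigma2 = (\<integral>x. real_cond_exp M (natfilt M y (0 - 1)) (\<lambda>x. (eps 0 x)\<^sup>2) x \<partial>M)"
      using integral_cong_AE[OF borel_measurable_const borel_measurable_cond_exp2 eps_cvar[of 0, THEN AE_symmetric]]
      by (simp add: prob_space)
    also have "\<dots> = (\<integral>x. (eps 0 x)\<^sup>2 \<partial>M)"
      by (rule sigma_finite_subalgebra.real_cond_exp_int(2)[OF sf ie2])
    also have "\<dots> \<le> (\<integral>x. K\<^sup>2 \<partial>M)"
      by (rule integral_mono_AE[OF ie2 _ e2b]) simp
    finally show ?thesis by (simp add: prob_space)
  qed
  have main: "AE x in M. ereal sigma2 \<le> liminf (\<lambda>n. ereal ((\<Sum>s=1..n. (eps (int s) x + z (int s) x)\<^sup>2) / real n))"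
  proof (rule abstract_liminf[where F="\<lambda>n. natfilt M y (int n)" and e="\<lambda>n. eps (int n)" and z="\<lambda>n. z (int n)" and K=K, OF P sf])
    show "sets (natfilt M y (int m)) \<subseteq> sets (natfilt M y (int n))" if "m \<le> n" for m n
      using that by (intro nf_mono) simp
    show "eps (int n) \<in> borel_measurable (natfilt M y (int n))" for n by (rule eps_adapted)
    show "z (int (Suc n)) \<in> borel_measurable (natfilt M y (int n))" for n
      using zF[of "int (Suc n)"] by simp
    show "AE x in M. \<bar>eps (int n) x\<bar> \<le> K" for n by (rule epsb)
    show "AE x in M. real_cond_exp M (natfilt M y (int n)) (eps (int (Suc n))) x = 0" for n
      using eps_mds[of "int (Suc n)"] by simp
    show "AE x in M. real_cond_exp M (natfilt M y (int n)) (\<lambda>x. (eps (int (Suc n)) x)\<^sup>2) x = sigma2" for n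
      using eps_cvar[of "int (Suc n)"] by simp
  qed (rule s2K)
  show ?thesis using main ident
  proof eventually_elim
    case (elim x)
    have "(\<Sum>s=1..n. (y (int s) x - ytil (int s - 1) x)\<^sup>2) = (\<Sum>s=1..n. (eps (int s) x + z (int s) x)\<^sup>2)" for n
      using elim(2) by simp
    then show ?case using elim(1) by simp
  qed
qed

end
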